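(* Let $n$ be a positive integer and let $\Omega_1,\Omega_2$ be two distinct copies of $2^{[n]}$. For $i=1,2$ let $\bm{p}_i=(p_i^{(1)},\dots,p_i^{(n)})$ be a probability vector, write $p_i:=p_i^{(1)}$, and let $\mu_i$ be the product measure on $\Omega_i$, $\mu_i(U)=\sum_{x\in U}\prod_{\ell\in x}p_i^{(\ell)}\prod_{k\in[n]\setminus x}(1-p_i^{(k)})$. Assume that $p_i=\max\{p_i^{(\ell)}:\ell\in[n]\}$ for $i=1,2$, that $p_1\geqslant p_2$, and that $p_1\leqslant 1/2$. Let $w:=\{\ell\in[n]:(p_1^{(\ell)},p_2^{(\ell)})=(p_1,p_2)\}$. Let $U_1\subset\Omega_1$, $U_2\subset\Omega_2$ be cross-intersecting with $\mu_1(U_1)\mu_2(U_2)=p_1p_2$. Then for $i=1,2$, $$U_i=\{x\sqcup y: x\in U_i|_w,\ y\in\Omega_i|_{[n]\setminus w}\},$$ i.e. for $x\in\Omega_i$ we have $x\in U_i$ if and only if $x\cap w\in U_i$. In particular $U_1|_w,U_2|_w$ are cross-intersecting. Moreover, if $p_1=p_2=1/2$, then $|U_1|_w|=|U_2|_w|=2^{|w|-1}$.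
   Context: A probability vector has all coordinates strictly between $0$ and $1$. Families $U_1,U_2$ are cross-intersecting if $x\cap y\neq\emptyset$ for all $x\in U_1$, $y\in U_2$. For $E\subset\Omega_i$ and $z\subset[n]$, $E|_z:=\{x\cap z: x\in E\}$; thus $\Omega_i|_z$ is a copy of $2^z$. *)

theory Defs
  imports Complex_Main
begin

text \<open>Ground set [n] = {1..n}; Omega_i is Pow {1..n}.\<close>

definition prob_vector :: "nat \<Rightarrow> (nat \<Rightarrow> real) \<Rightarrow> bool" where
  "prob_vector n p \<longleftrightarrow> (\<forall>l\<in>{1..n}. 0 < p l \<and> p l < 1)"

definition prod_measure :: "nat \<Rightarrow> (nat \<Rightarrow> real) \<Rightarrow> nat set set \<Rightarrow> real" where
  "prod_measure n p U =
     (\<Sum>x\<in>U. (\<Prod>l\<in>x. p l) * (\<Prod>k\<in>{1..n} - x. 1 - p k))"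

definition cross_intersecting :: "'a set set \<Rightarrow> 'a set set \<Rightarrow> bool" where
  "cross_intersecting U1 U2 \<longleftrightarrow> (\<forall>x\<in>U1. \<forall>y\<in>U2. x \<inter> y \<noteq> {})"

definition restr :: "'a set set \<Rightarrow> 'a set \<Rightarrow> 'a set set" where
  "restr E z = (\<lambda>x. x \<inter> z) ` E"

end

theory Submission
  imports Defs
begin




lemma T2:
  fixes p q a0 a1 b0 b1 :: real
  assumes q0: "0 < q" and qp: "q \<le> p" and ph: "p \<le> 1/2"
    and a0: "0 \<le> a0" and a01: "a0 \<le> a1" and a1: "a1 \<le> 1"
    and b0: "0 \<le> b0" and b01: "b0 \<le> b1" and b1: "b1 \<le> 1"
    and h01: "(1-p)*(1-q)*a0*b1 \<le> p*q*(1-a0)*(1-b1)"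
    and h10: "(1-p)*(1-q)*a1*b0 \<le> p*q*(1-a1)*(1-b0)"
  shows "(1-p)*(1-q)*((1-p)*a0+p*a1)*((1-q)*b0+q*b1)
         \<le> p*q*(1-((1-p)*a0+p*a1))*(1-((1-q)*b0+q*b1))"
proof -
  define X where "X = (1-p)*a0+p*a1"
  define Y where "Y = (1-q)*b0+q*b1"
  define D0 where "D0 = p*q*(1-a0) + (1-p)*(1-q)*a0"
  define D1 where "D1 = p*q*(1-a1) + (1-p)*(1-q)*a1"
  define K where "K = p*q*(1-X) + (1-p)*(1-q)*X"
  have pq: "0 < p*q" using q0 qp by simp
  have "D0 = p*q + (1-p-q)*a0" unfolding D0_def by (simp add: algebra_simps)
  moreover have "0 \<le> (1-p-q)*a0" using a0 qp ph by (intro mult_nonneg_nonneg) auto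
  ultimately have D0p: "0 < D0" using pq by linarith
  have "D1 = p*q + (1-p-q)*a1" unfolding D1_def by (simp add: algebra_simps)
  moreover have "0 \<le> (1-p-q)*a1" using a0 a01 qp ph by (intro mult_nonneg_nonneg) auto
  ultimately have D1p: "0 < D1" using pq by linarith
  have "(1-p)*a0 \<le> (1-p)*a1" using a01 ph by (intro mult_left_mono) auto
  moreover have "0 \<le> (1-p)*a0" "0 \<le> p*a1" using a0 a01 ph qp q0 by auto
  ultimately have X01: "0 \<le> X" "X \<le> 1" unfolding X_def using a1 by (auto simp: algebra_simps)
  have K0: "0 \<le> K" unfolding K_def using X01 pq qp ph q0
    by (intro add_nonneg_nonneg mult_nonneg_nonneg) auto
  have hb1: "b1 * D0 \<le> p*q*(1-a0)" using h01 unfolding D0_def by (simp add: algebra_simps)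
  have hb0: "b0 * D1 \<le> p*q*(1-a1)" using h10 unfolding D1_def by (simp add: algebra_simps)
  define Yn where "Yn = (1-q)*(p*q*(1-a1))*D0 + q*(p*q*(1-a0))*D1"
  have YD: "Y*(D0*D1) \<le> Yn"
  proof -
    have "Y*(D0*D1) = (1-q)*(b0*D1)*D0 + q*(b1*D0)*D1" unfolding Y_def by (simp add: algebra_simps)
    also have "\<dots> \<le> Yn" unfolding Yn_def using hb0 hb1 D0p D1p qp ph q0
      by (intro add_mono mult_right_mono mult_left_mono) auto
    finally show ?thesis .
  qed
  have E: "p*q*(1-X)*(D0*D1) - K*Yn
     = (a1-a0)*(1-p-q)*(1-p)*(1-q)*(p*q)*(p*q*(1-a1+a0) + a0*(1-p-q))"
    unfolding X_def K_def Yn_def D0_def D1_def by (simp add: algebra_simps)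
  have "0 \<le> (a1-a0)*(1-p-q)*(1-p)*(1-q)*(p*q)*(p*q*(1-a1+a0) + a0*(1-p-q))"
    using a01 qp ph pq a0 a1 q0 by (intro mult_nonneg_nonneg add_nonneg_nonneg) auto
  hence "K*Yn \<le> p*q*(1-X)*(D0*D1)" using E by linarith
  moreover have "K*(Y*(D0*D1)) \<le> K*Yn" using YD K0 by (rule mult_left_mono)
  ultimately have "(K*Y)*(D0*D1) \<le> (p*q*(1-X))*(D0*D1)" by (simp add: algebra_simps)
  hence "K*Y \<le> p*q*(1-X)" using D0p D1p by simp
  thus ?thesis unfolding X_def[symmetric] Y_def[symmetric] K_def by (simp add: algebra_simps)
qed


lemma F_nonneg:
  fixes a0 p q :: real
  assumes g1: "0 \<le> a0" and g2: "a0 \<le> q" and g3: "0 \<le> q" and g4: "q \<le> p" and g5: "p \<le> 1/2"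
  shows "0 \<le> p*(p*q + (1-p-q)*a0) - ((1-p)*a0+p*p)*((1-q)*(p*q + (1-p-q)*a0) + q*(1-a0)*p)"
proof -
  have "24 * (p*(p*q + (1-p-q)*a0) - ((1-p)*a0+p*p)*((1-q)*(p*q + (1-p-q)*a0) + q*(1-a0)*p)) = 8*(q)*(p - q)*(p - q)*(p - q)*(1 - 2*p) + 12*(q)*(q)*(p - q)*(p - q) + 26*(a0)*(p - q)*(p - q)*(1 - 2*p) + 46*(q - a0)*(q)*(p - q)*(1 - 2*p) + 18*(a0)*(q - a0)*(p - q)*(1 - 2*p) + 20*(q)*(p - q)*(p - q)*(1 - 2*p) + 2*(q)*(q)*(p - q)*(1 - 2*p)*(1 - 2*p) + 12*(q - a0)*(q - a0)*(q)*(p - q) + 11*(a0)*(p - q)*(1 - 2*p) + 4*(q - a0)*(q - a0)*(q - a0)*(p - q)*(1 - 2*p) + 6*(q - a0)*(q - a0)*(q)*(1 - 2*p) + 6*(q - a0)*(q - a0)*(q) + 4*(q)*(p - q)*(p - q)*(1 - 2*p)*(1 - 2*p) + 6*(q - a0)*(q)*(q)*(1 - 2*p)*(1 - 2*p) + 4*(a0)*(a0)*(a0)*(p - q)*(1 - 2*p) + 12*(a0)*(q - a0)*(p - q) + 9*(a0)*(q - a0)*(1 - 2*p) + 15*(a0)*(q - a0)*(1 - 2*p)*(1 - 2*p) + 24*(a0)*(p - q)*(p - q)*(p - q) + 13*(a0)*(p - q)*(1 - 2*p)*(1 - 2*p) + 6*(q - a0)*(q - a0)*(q)*(1 - 2*p)*(1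 - 2*p) + 12*(q - a0)*(q)*(q)*(q)*(1 - 2*p)"
    by (simp add: algebra_simps)
  moreover have "0 \<le> 8*(q)*(p - q)*(p - q)*(p - q)*(1 - 2*p) + 12*(q)*(q)*(p - q)*(p - q) + 26*(a0)*(p - q)*(p - q)*(1 - 2*p) + 46*(q - a0)*(q)*(p - q)*(1 - 2*p) + 18*(a0)*(q - a0)*(p - q)*(1 - 2*p) + 20*(q)*(p - q)*(p - q)*(1 - 2*p) + 2*(q)*(q)*(p - q)*(1 - 2*p)*(1 - 2*p) + 12*(q - a0)*(q - a0)*(q)*(p - q) + 11*(a0)*(p - q)*(1 - 2*p) + 4*(q - a0)*(q - a0)*(q - a0)*(p - q)*(1 - 2*p) + 6*(q - a0)*(q - a0)*(q)*(1 - 2*p) + 6*(q - a0)*(q - a0)*(q) + 4*(q)*(p - q)*(p - q)*(1 - 2*p)*(1 - 2*p) + 6*(q - a0)*(q)*(q)*(1 - 2*p)*(1 - 2*p) + 4*(a0)*(a0)*(a0)*(p - q)*(1 - 2*p) + 12*(a0)*(q - a0)*(p - q) + 9*(a0)*(q - a0)*(1 - 2*p) + 15*(a0)*(q - a0)*(1 - 2*p)*(1 - 2*p) + 24*(a0)*(p - q)*(p - q)*(p - q) + 13*(a0)*(p - q)*(1 - 2*p)*(1 - 2*p) + 6*(q - a0)*(q - a0)*(q)*(1 - 2*p)*(1 - 2*p) + 12*(q - a0)*(q)*(q)*(q)*(1 - 2*p)"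
    using g1 g2 g3 g4 g5 by (intro add_nonneg_nonneg mult_nonneg_nonneg; simp)
  ultimately show ?thesis by simp
qed

lemma B1:
  fixes p q a0 a1 b0 b1 :: real
  assumes q0: "0 < q" and qp: "q \<le> p" and ph: "p \<le> 1/2"
    and a0: "0 \<le> a0" and a0q: "a0 \<le> q" and a1q: "q \<le> a1" and a1p: "a1 \<le> p"
    and b0: "0 \<le> b0" and b1: "0 \<le> b1"
    and hb1: "b1 * (p*q + (1-p-q)*a0) \<le> p*q*(1-a0)"
    and P10: "a1 * b0 \<le> p*q"
  shows "((1-p)*a0+p*a1)*((1-q)*b0+q*b1) \<le> p*q"
proof -
  define D0 where "D0 = p*q + (1-p-q)*a0"
  define X where "X = (1-p)*a0+p*a1"
  define W where "W = (1-q)*D0 + q*(1-a0)*a1"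
  have pq: "0 < p*q" using q0 qp by simp
  have D0p: "0 < D0"
  proof -
    have "0 \<le> (1-p-q)*a0" using a0 qp ph by (intro mult_nonneg_nonneg) auto
    thus ?thesis unfolding D0_def using pq by linarith
  qed
  have a1pos: "0 < a1" using q0 a1q by simp
  define Phi where "Phi = (\<lambda>t. t*D0 - ((1-p)*a0+p*t)*((1-q)*D0 + q*(1-a0)*t))"
  have Phiq: "Phi q = (1-p)*(q-a0)*(p*q*(1-q) + (1-p-2*q+p*q)*a0)"
    unfolding Phi_def D0_def by (simp add: algebra_simps)
  have Phiq0: "0 \<le> Phi q"
  proof -
    have "q*(p*q*(1-q) + (1-p-2*q+p*q)*a0) = (q-a0)*(p*q*(1-q)) + a0*(q*(1-2*q))"
      by (simp add: algebra_simps)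
    moreover have "0 \<le> (q-a0)*(p*q*(1-q)) + a0*(q*(1-2*q))"
      using a0 a0q q0 qp ph pq by (intro add_nonneg_nonneg mult_nonneg_nonneg) auto
    ultimately have "0 \<le> q*(p*q*(1-q) + (1-p-2*q+p*q)*a0)" by simp
    hence "0 \<le> p*q*(1-q) + (1-p-2*q+p*q)*a0" using q0 by (simp add: zero_le_mult_iff)
    thus ?thesis unfolding Phiq using a0q ph by (intro mult_nonneg_nonneg) auto
  qed
  have Phip0: "0 \<le> Phi p"
    unfolding Phi_def D0_def using F_nonneg[OF a0 a0q _ qp ph] q0 by simp
  have decomp: "(p-q)*Phi a1 = (p-a1)*Phi q + (a1-q)*Phi p + (p-q)*(a1-q)*(p-a1)*(p*q*(1-a0))"
    unfolding Phi_def by (simp add: algebra_simps)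
  have Phi0: "0 \<le> Phi a1"
  proof (cases "p = q")
    case True
    hence "a1 = q" using a1q a1p by simp
    thus ?thesis using Phiq0 by simp
  next
    case False
    hence pq': "0 < p - q" using qp by simp
    have "0 \<le> (p-a1)*Phi q + (a1-q)*Phi p + (p-q)*(a1-q)*(p-a1)*(p*q*(1-a0))"
      using Phiq0 Phip0 a1q a1p pq a0q q0 qp ph
      by (intro add_nonneg_nonneg mult_nonneg_nonneg) auto
    hence "0 \<le> (p-q)*Phi a1" using decomp by simp
    thus ?thesis using pq' by (simp add: zero_le_mult_iff)
  qed
  hence XW: "X*W \<le> a1*D0" unfolding Phi_def X_def W_def by simp
  have YD: "((1-q)*b0+q*b1)*(a1*D0) \<le> p*q*W"
  proof -
    have "((1-q)*b0+q*b1)*(a1*D0) = (1-q)*(a1*b0)*D0 + q*(b1*D0)*a1" by (simp add: algebra_simps)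
    also have "\<dots> \<le> (1-q)*(p*q)*D0 + q*(p*q*(1-a0))*a1"
      using P10 hb1 D0p a1pos qp ph q0 unfolding D0_def
      by (intro add_mono mult_right_mono mult_left_mono) auto
    also have "\<dots> = p*q*W" unfolding W_def by (simp add: algebra_simps)
    finally show ?thesis .
  qed
  have X0: "0 \<le> X" unfolding X_def using a0 a1pos ph q0 qp by simp
  have "X*((1-q)*b0+q*b1)*(a1*D0) \<le> X*(p*q*W)"
    using YD X0 by (simp add: mult_left_mono mult.assoc)
  also have "\<dots> = p*q*(X*W)" by (simp add: ac_simps)
  also have "\<dots> \<le> p*q*(a1*D0)" using XW pq by (intro mult_left_mono) auto
  finally have "(X*((1-q)*b0+q*b1))*(a1*D0) \<le> (p*q)*(a1*D0)" by (simp add: ac_simps)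
  moreover have "0 < a1*D0" using a1pos D0p by simp
  ultimately show ?thesis unfolding X_def by (rule mult_right_le_imp_le)
qed


lemma F6_poly:
  fixes p q :: real
  assumes q0: "0 < q" and qp: "q \<le> p" and ph: "p \<le> 1/2" and cond: "p*p < 2*q - q*q"
  shows "(p*p + (2*q - q*q))^2 \<le> 4*p*q"
proof -
  define s where "s = p - q"
  have s0: "0 \<le> s" using qp s_def by simp
  have ps: "p = q + s" using s_def by simp
  have c2: "s*s \<le> 2*q*(1-q-s)" using cond unfolding ps by (simp add: algebra_simps)
  have c3: "s*(s*s) \<le> s*(2*q*(1-q-s))" using c2 s0 by (rule mult_left_mono)
  have G: "4*p*q - (p*p + (2*q - q*q))^2
     = s*(4*q*(1-2*p) + 2*q*s*(1-s-q) + (2*q*s*(1-q-s) - s*s*s))"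
    unfolding ps by (simp add: algebra_simps power2_eq_square)
  have "0 \<le> 4*q*(1-2*p)" using q0 ph by simp
  moreover have "0 \<le> 2*q*s*(1-s-q)" using q0 s0 ph ps by (intro mult_nonneg_nonneg) auto
  moreover have "0 \<le> 2*q*s*(1-q-s) - s*s*s" using c3 by (simp add: algebra_simps)
  ultimately have "0 \<le> s*(4*q*(1-2*p) + 2*q*s*(1-s-q) + (2*q*s*(1-q-s) - s*s*s))"
    using s0 by (intro mult_nonneg_nonneg) auto
  thus ?thesis using G by linarith
qed

lemma B2:
  fixes p q a0 a1 b0 b1 :: real
  assumes q0: "0 < q" and qp: "q \<le> p" and ph: "p \<le> 1/2"
    and a0: "0 \<le> a0" and a0q: "a0 \<le> q" and a1p: "p \<le> a1" and a1: "a1 \<le> 1"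
    and b0: "0 \<le> b0" and b1: "0 \<le> b1"
    and hb1: "b1 * (p*q + (1-p-q)*a0) \<le> p*q*(1-a0)"
    and hb0: "b0 * (p*q + (1-p-q)*a1) \<le> p*q*(1-a1)"
  shows "((1-p)*a0+p*a1)*((1-q)*b0+q*b1) \<le> p*q"
proof -
  define c where "c = 1-p-q"
  have c0: "0 \<le> c" using c_def qp ph by simp
  have pq: "0 < p*q" using q0 qp by simp
  define D where "D = (\<lambda>t::real. p*q + c*t)"
  define H where "H = (\<lambda>t. p*q*(1-t)/D t)"
  define v where "v = (\<lambda>t. (1-q)*H t + q)"
  define u where "u = (\<lambda>t::real. p*t)"
  have Dpos: "0 < D t" if "0 \<le> t" for t
  proof -
    have "0 \<le> c*t" using c0 that by simp
    thus ?thesis unfolding D_def using pq by linarith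
  qed
  have D1: "D 1 = (1-p)*(1-q)" unfolding D_def c_def by (simp add: algebra_simps)
  have Dp: "D p = p*(1-p)" unfolding D_def c_def by (simp add: algebra_simps)
  have Hp: "H p = q"
  proof -
    have "p*(1-p) \<noteq> 0" using q0 qp ph by simp
    thus ?thesis unfolding H_def Dp by (simp add: field_simps)
  qed
  have H1: "H 1 = 0" unfolding H_def by simp
  have b0H: "b0 \<le> H a1"
    using hb0 Dpos[of a1] a1p q0 qp unfolding H_def D_def c_def by (simp add: pos_le_divide_eq)
  define s where "s = (1-p)*a0"
  have s0: "0 \<le> s" unfolding s_def using a0 ph by simp
  have qb1: "q*b1 \<le> q - s"
  proof -
    have Da0: "0 < D a0" using Dpos a0 by simp
    have id: "(q - (1-p)*a0)*(p*q + (1-p-q)*a0) - q*(p*q*(1-a0)) = a0*(1-p-q)*(1-p)*(q-a0)"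
      by (simp add: algebra_simps)
    have "0 \<le> a0*(1-p-q)*(1-p)*(q-a0)" using a0 a0q qp ph by (intro mult_nonneg_nonneg) auto
    hence "q*(p*q*(1-a0)) \<le> (q - (1-p)*a0)*(p*q + (1-p-q)*a0)" using id by linarith
    moreover have "q*(b1 * (p*q + (1-p-q)*a0)) \<le> q*(p*q*(1-a0))" using hb1 q0 by simp
    ultimately have "(q*b1) * (p*q + (1-p-q)*a0) \<le> (q - (1-p)*a0)*(p*q + (1-p-q)*a0)"
      by (simp add: algebra_simps)
    moreover have "0 < p*q + (1-p-q)*a0" using Da0 unfolding D_def c_def .
    ultimately show ?thesis unfolding s_def by simp
  qed
  have uv: "u t * v t \<le> p*q" if t0: "0 \<le> t" and t1: "t \<le> 1" for t
  proof -
    have Dt: "0 < D t" using Dpos t0 .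
    have "u t * v t * D t = p*t*((1-q)*(p*q*(1-t)) + q*D t)"
      unfolding u_def v_def H_def using Dt by (simp add: field_simps)
    moreover have "p*q*D t - p*t*((1-q)*(p*q*(1-t)) + q*D t)
        = p*q*(1-t)*((1-t)*(p*q) + t*((1-2*p)*(1-q)))"
      unfolding D_def c_def by (simp add: algebra_simps)
    moreover have "0 \<le> p*q*(1-t)*((1-t)*(p*q) + t*((1-2*p)*(1-q)))"
      using pq t0 t1 ph qp q0 by (intro mult_nonneg_nonneg add_nonneg_nonneg) auto
    ultimately have "u t * v t * D t \<le> p*q*D t" by linarith
    thus ?thesis using Dt by simp
  qed
  have Hmono: "H y \<le> H x" if "0 \<le> x" "x \<le> y" for x y
  proof -
    have Dx: "0 < D x" and Dy: "0 < D y" using Dpos that by auto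
    have "(1-x)*D y - (1-y)*D x = (p*q + c)*(y-x)" unfolding D_def by (simp add: algebra_simps)
    moreover have "0 \<le> (p*q + c)*(y-x)" using pq c0 that by simp
    ultimately have "p*q*(1-y)*D x \<le> p*q*(1-x)*D y" using pq
      by (smt (verit, ccfv_SIG) mult.assoc mult_left_mono)
    thus ?thesis unfolding H_def using Dx Dy by (simp add: divide_simps mult.commute mult.left_commute)
  qed
  have Hchord: "(y-x)*H t \<le> (y-t)*H x + (t-x)*H y" if "0 \<le> x" "x \<le> t" "t \<le> y" for x t y
  proof -
    have Dx: "0 < D x" and Dy: "0 < D y" and Dt: "0 < D t" using Dpos that by auto
    have id: "(y-t)*(1-x)*D t*D y + (t-x)*(1-y)*D t*D x - (y-x)*(1-t)*D x*D y
       = c*(c+p*q)*(t-x)*(y-t)*(y-x)" unfolding D_def by (simp add: algebra_simps)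
    have "0 \<le> c*(c+p*q)*(t-x)*(y-t)*(y-x)" using c0 pq that by (intro mult_nonneg_nonneg) auto
    hence "(y-x)*(1-t)*D x*D y \<le> (y-t)*(1-x)*D t*D y + (t-x)*(1-y)*D t*D x" using id by linarith
    hence "p*q*((y-x)*(1-t)*D x*D y) \<le> p*q*((y-t)*(1-x)*D t*D y + (t-x)*(1-y)*D t*D x)"
      using pq by (intro mult_left_mono) auto
    moreover have HtD: "H t * D t = p*q*(1-t)" unfolding H_def using Dt by simp
    moreover have HxD: "H x * D x = p*q*(1-x)" unfolding H_def using Dx by simp
    moreover have HyD: "H y * D y = p*q*(1-y)" unfolding H_def using Dy by simp
    ultimately have "((y-x)*H t) * (D x * D y * D t) \<le> ((y-t)*H x + (t-x)*H y) * (D x * D y * D t)"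
    proof -
      assume ineq: "p*q*((y-x)*(1-t)*D x*D y) \<le> p*q*((y-t)*(1-x)*D t*D y + (t-x)*(1-y)*D t*D x)"
        and h1: "H t * D t = p*q*(1-t)" and h2: "H x * D x = p*q*(1-x)" and h3: "H y * D y = p*q*(1-y)"
      have "((y-x)*H t) * (D x * D y * D t) = (y-x)*(H t * D t)*D x*D y" by (simp add: ac_simps)
      also have "\<dots> = p*q*((y-x)*(1-t)*D x*D y)" unfolding h1 by (simp add: ac_simps)
      also have "\<dots> \<le> p*q*((y-t)*(1-x)*D t*D y + (t-x)*(1-y)*D t*D x)" by (rule ineq)
      also have "\<dots> = (y-t)*(H x * D x)*D t*D y + (t-x)*(H y * D y)*D t*D x"
        unfolding h2 h3 by (simp add: algebra_simps)
      also have "\<dots> = ((y-t)*H x + (t-x)*H y) * (D x * D y * D t)" by (simp add: algebra_simps)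
      finally show ?thesis .
    qed
    moreover have "0 < D x * D y * D t" using Dx Dy Dt by simp
    ultimately show ?thesis by (rule mult_right_le_imp_le)
  qed
  define f where "f = (\<lambda>t. u t + v t)"
  have X: "(1-p)*a0+p*a1 = s + u a1" unfolding s_def u_def by simp
  have Y: "(1-q)*b0+q*b1 \<le> v a1 - s"
  proof -
    have "(1-q)*b0 \<le> (1-q)*H a1" using b0H qp ph by (intro mult_left_mono) auto
    thus ?thesis using qb1 unfolding v_def by linarith
  qed
  have Xn: "0 \<le> s + u a1" unfolding u_def using s0 a1p qp q0 by simp
  have XY: "((1-p)*a0+p*a1)*((1-q)*b0+q*b1) \<le> (s + u a1)*(v a1 - s)"
    unfolding X using Y Xn by (rule mult_left_mono)
  have ua: "0 \<le> u a1" unfolding u_def using a1p qp q0 by simp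
  have uva: "u a1 * v a1 \<le> p*q" using uv a1p a1 qp q0 by simp
  show ?thesis
  proof (cases "v a1 \<le> u a1")
    case True
    have "(s + u a1)*(v a1 - s) = u a1 * v a1 + s*(v a1 - u a1) - s*s" by (simp add: algebra_simps)
    moreover have "s*(v a1 - u a1) \<le> 0" using True s0 by (simp add: mult_nonneg_nonpos)
    moreover have "0 \<le> s*s" by simp
    ultimately show ?thesis using XY uva by linarith
  next
    case False
    hence gt: "u a1 < v a1" by simp
    \<comment> \<open>f a1 \<le> 2 sqrt pq\<close>
    have amgm: "4*((s + u a1)*(v a1 - s)) \<le> (f a1)^2"
    proof -
      have "(f a1)^2 - 4*((s + u a1)*(v a1 - s)) = (u a1 + s - (v a1 - s))^2"
        unfolding f_def by (simp add: algebra_simps power2_eq_square)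
      thus ?thesis by (smt (verit) zero_le_power2)
    qed
    have pq1: "p \<le> 1" using ph by simp
    have vmono: "v y - u y \<le> v x - u x" if "0 \<le> x" "x \<le> y" for x y
    proof -
      have "(1-q)*H y \<le> (1-q)*H x" using Hmono[OF that] qp ph by (intro mult_left_mono) auto
      moreover have "u x \<le> u y" unfolding u_def using that q0 qp by (intro mult_left_mono) auto
      ultimately show ?thesis unfolding v_def by linarith
    qed
    have fp: "f p \<le> 2*sqrt(p*q)"
    proof -
      have "v a1 - u a1 \<le> v p - u p" using vmono[of p a1] a1p q0 qp by simp
      hence "u p < v p" using gt by simp
      hence "p*p < 2*q - q*q" unfolding u_def v_def Hp by (simp add: algebra_simps)
      hence sq: "(p*p + (2*q - q*q))^2 \<le> 4*p*q" using F6_poly q0 qp ph by blast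
      have fpv: "f p = p*p + (2*q - q*q)" unfolding f_def u_def v_def Hp by (simp add: algebra_simps)
      have "(f p)^2 \<le> (2*sqrt(p*q))^2" using sq pq unfolding fpv by (simp add: power_mult_distrib)
      moreover have "0 \<le> 2*sqrt(p*q)" using pq by simp
      ultimately show ?thesis by (rule power2_le_imp_le)
    qed
    have cont: "continuous_on {a1..1} (\<lambda>t. v t - u t)"
    proof -
      have "continuous_on {a1..1} (\<lambda>t. (1-q)*(p*q*(1-t)/(p*q + c*t)) + q - p*t)"
        apply (intro continuous_intros)
        using Dpos a1p q0 qp unfolding D_def
        apply auto
        by (metis less_irrefl order.trans less_imp_le)
      thus ?thesis unfolding v_def u_def H_def D_def by simp
    qed
    have at1: "v 1 - u 1 \<le> 0" unfolding v_def u_def H1 using qp by simp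
    obtain t' where t': "a1 \<le> t'" "t' \<le> 1" "v t' - u t' = 0"
      using IVT2'[of "\<lambda>t. v t - u t" 1 0 a1, OF at1 _ a1 cont] gt by auto
    have ft': "f t' \<le> 2*sqrt(p*q)"
    proof -
      have "0 \<le> t'" using t' a1p q0 qp by simp
      hence "u t' * v t' \<le> p*q" using uv t'(2) by blast
      hence "(u t')^2 \<le> p*q" using t'(3) by (simp add: power2_eq_square)
      hence "u t' \<le> sqrt (p*q)" by (rule real_le_rsqrt)
      thus ?thesis unfolding f_def using t'(3) by simp
    qed
    have fa1: "f a1 \<le> 2*sqrt(p*q)"
    proof (cases "t' = p")
      case True
      hence "a1 = p" using t' a1p by simp
      thus ?thesis using fp by simp
    next
      case False
      hence tp: "p < t'" using t' a1p by simp
      have "(t'-p)*H a1 \<le> (t'-a1)*H p + (a1-p)*H t'"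
        using Hchord[of p a1 t'] a1p t' q0 qp by simp
      hence "(1-q)*((t'-p)*H a1) \<le> (1-q)*((t'-a1)*H p + (a1-p)*H t')"
        using qp ph by (intro mult_left_mono) auto
      hence "(t'-p)*((1-q)*H a1) \<le> (1-q)*((t'-a1)*H p + (a1-p)*H t')"
        by (simp add: ac_simps)
      hence "(t'-p)*f a1 \<le> (t'-a1)*f p + (a1-p)*f t'"
        unfolding f_def u_def v_def by (simp add: algebra_simps)
      also have "\<dots> \<le> (t'-a1)*(2*sqrt(p*q)) + (a1-p)*(2*sqrt(p*q))"
        using fp ft' t' a1p by (intro add_mono mult_left_mono) auto
      also have "\<dots> = (t'-p)*(2*sqrt(p*q))" by (simp add: algebra_simps)
      finally show ?thesis using tp by simp
    qed
    have f0: "0 \<le> f a1" unfolding f_def using ua gt by simp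
    have "(f a1)^2 \<le> (2*sqrt(p*q))^2" using fa1 f0 by (rule power_mono) 
    hence "(f a1)^2 \<le> 4*(p*q)" using pq by (simp add: power_mult_distrib)
    thus ?thesis using XY amgm by linarith
  qed
qed


lemma LL:
  fixes p q X Y :: real
  assumes q0: "0 < q" and qp: "q \<le> p" and ph: "p \<le> 1/2"
    and X0: "0 \<le> X" and X1: "X \<le> 1" and Y0: "0 \<le> Y"
    and h: "(1-p)*(1-q)*X*Y \<le> p*q*(1-X)*(1-Y)"
    and out: "X \<le> q \<or> p \<le> X"
  shows "X*Y \<le> p*q"
proof (rule ccontr)
  assume "\<not> X*Y \<le> p*q"
  hence gt: "p*q < X*Y" by simp
  have pq: "0 < p*q" using q0 qp by simp
  have w: "0 < (1-p)*(1-q)" using qp ph by simp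
  have "(1-p)*(1-q)*(p*q) < (1-p)*(1-q)*(X*Y)" using gt w by (rule mult_strict_left_mono)
  also have "\<dots> \<le> p*q*((1-X)*(1-Y))" using h by (simp add: ac_simps)
  finally have "(1-p)*(1-q)*(p*q) < p*q*((1-X)*(1-Y))" .
  hence "((1-p)*(1-q))*(p*q) < ((1-X)*(1-Y))*(p*q)" by (simp add: ac_simps)
  hence A: "(1-p)*(1-q) < (1-X)*(1-Y)" using mult_right_less_imp_less pq by fastforce
  have Xp: "0 < X" using gt pq X0 by (cases "X = 0") auto
  have "X*(1-Y) < X - p*q" using gt by (simp add: algebra_simps)
  hence "(1-X)*(X*(1-Y)) \<le> (1-X)*(X - p*q)" using X1 by (intro mult_left_mono) auto
  moreover have "X*((1-p)*(1-q)) < X*((1-X)*(1-Y))" using A Xp by simp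
  ultimately have "X*((1-p)*(1-q)) < (1-X)*(X-p*q)" by (simp add: algebra_simps)
  hence "0 < -((X-p)*(X-q))" by (simp add: algebra_simps)
  moreover have "0 \<le> (X-p)*(X-q)"
  proof (cases "X \<le> q")
    case True thus ?thesis using qp by (intro mult_nonpos_nonpos) auto
  next
    case False thus ?thesis using out qp by (auto intro: mult_nonneg_nonneg)
  qed
  ultimately show False by simp
qed

lemma CaseA:
  fixes p q a0 a1 b0 b1 :: real
  assumes q0: "0 < q" and qp: "q \<le> p" and ph: "p \<le> 1/2"
    and a0q: "q \<le> a0" and a01: "a0 \<le> a1"
    and b0: "0 \<le> b0" and b1: "0 \<le> b1"
    and Xp: "(1-p)*a0+p*a1 < p"
    and P01: "a0 * b1 \<le> p*q" and P10: "a1 * b0 \<le> p*q"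
  shows "((1-p)*a0+p*a1)*((1-q)*b0+q*b1) \<le> p*q"
proof -
  define X where "X = (1-p)*a0+p*a1"
  define W where "W = (1-q)*a0 + q*a1"
  have pq: "0 < p*q" using q0 qp by simp
  have a0p: "0 < a0" using q0 a0q by simp
  have a1p: "0 < a1" using a0p a01 by simp
  have key: "p*q*a1 \<le> (1-p)*(1-q)*a0"
  proof -
    have "p*a1 < p - (1-p)*a0" using Xp by simp
    hence "q*(p*a1) \<le> q*(p - (1-p)*a0)" using q0 by simp
    moreover have "q*(p - (1-p)*a0) \<le> (1-p)*(1-q)*a0"
    proof -
      have "q*p \<le> (1-p)*q" using q0 ph by simp
      also have "\<dots> \<le> (1-p)*a0" using a0q ph by (intro mult_left_mono) auto
      finally show ?thesis by (simp add: algebra_simps)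
    qed
    ultimately show ?thesis by (simp add: ac_simps)
  qed
  have XW: "X*W \<le> a0*a1"
  proof -
    have "a0*a1 - X*W = ((1-p)*(1-q)*a0 - p*q*a1)*(a1-a0)" unfolding X_def W_def
      by (simp add: algebra_simps)
    moreover have "0 \<le> ((1-p)*(1-q)*a0 - p*q*a1)*(a1-a0)" using key a01 by simp
    ultimately show ?thesis by simp
  qed
  have YD: "((1-q)*b0+q*b1)*(a0*a1) \<le> p*q*W"
  proof -
    have "((1-q)*b0+q*b1)*(a0*a1) = (1-q)*(a1*b0)*a0 + q*(a0*b1)*a1" by (simp add: algebra_simps)
    also have "\<dots> \<le> (1-q)*(p*q)*a0 + q*(p*q)*a1"
      using P10 P01 a0p a1p qp ph q0
      by (intro add_mono mult_right_mono mult_left_mono) auto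
    also have "\<dots> = p*q*W" unfolding W_def by (simp add: algebra_simps)
    finally show ?thesis .
  qed
  have X0: "0 \<le> X" unfolding X_def using a0p a1p ph q0 qp by simp
  have "X*((1-q)*b0+q*b1)*(a0*a1) \<le> X*(p*q*W)"
    using YD X0 by (simp add: mult_left_mono mult.assoc)
  also have "\<dots> = p*q*(X*W)" by (simp add: ac_simps)
  also have "\<dots> \<le> p*q*(a0*a1)" using XW pq by (intro mult_left_mono) auto
  finally have "(X*((1-q)*b0+q*b1))*(a0*a1) \<le> (p*q)*(a0*a1)" by (simp add: ac_simps)
  moreover have "0 < a0*a1" using a0p a1p by simp
  ultimately show ?thesis unfolding X_def by (rule mult_right_le_imp_le)
qed

lemma T1:
  fixes p q a0 a1 b0 b1 :: real
  assumes q0: "0 < q" and qp: "q \<le> p" and ph: "p \<le> 1/2"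
    and a0: "0 \<le> a0" and a01: "a0 \<le> a1" and a1: "a1 \<le> 1"
    and b0: "0 \<le> b0" and b01: "b0 \<le> b1" and b1: "b1 \<le> 1"
    and P01: "a0 * b1 \<le> p*q" and P10: "a1 * b0 \<le> p*q"
    and h01: "(1-p)*(1-q)*a0*b1 \<le> p*q*(1-a0)*(1-b1)"
    and h10: "(1-p)*(1-q)*a1*b0 \<le> p*q*(1-a1)*(1-b0)"
  shows "((1-p)*a0+p*a1)*((1-q)*b0+q*b1) \<le> p*q"
proof -
  define X where "X = (1-p)*a0+p*a1"
  define Y where "Y = (1-q)*b0+q*b1"
  have hXY: "(1-p)*(1-q)*X*Y \<le> p*q*(1-X)*(1-Y)"
    unfolding X_def Y_def using T2[OF q0 qp ph a0 a01 a1 b0 b01 b1 h01 h10] .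
  have "(1-p)*a0 \<le> (1-p)*a1" using a01 ph by (intro mult_left_mono) auto
  moreover have "p*a0 \<le> p*a1" using a01 q0 qp by (intro mult_left_mono) auto
  moreover have "0 \<le> (1-p)*a0" "0 \<le> p*a1" using a0 a01 ph qp q0 by auto
  ultimately have X01: "0 \<le> X" "X \<le> 1" "a0 \<le> X" "X \<le> a1" unfolding X_def using a1
    by (auto simp: algebra_simps)
  have Y0: "0 \<le> Y" unfolding Y_def using b0 b01 qp ph q0 by simp
  have b1n: "0 \<le> b1" using b0 b01 by simp
  have hb1: "b1 * (p*q + (1-p-q)*a0) \<le> p*q*(1-a0)" using h01 by (simp add: algebra_simps)
  have hb0: "b0 * (p*q + (1-p-q)*a1) \<le> p*q*(1-a1)" using h10 by (simp add: algebra_simps)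
  show ?thesis
  proof (cases "X \<le> q \<or> p \<le> X")
    case True
    thus ?thesis using LL[OF q0 qp ph X01(1,2) Y0 hXY] unfolding X_def Y_def by simp
  next
    case False
    hence lens: "q < X" "X < p" by auto
    show ?thesis
    proof (cases "q \<le> a0")
      case True
      thus ?thesis using CaseA[OF q0 qp ph True a01 b0 b1n _ P01 P10] lens unfolding X_def by simp
    next
      case False
      hence a0q: "a0 \<le> q" by simp
      show ?thesis
      proof (cases "a1 \<le> p")
        case True
        have "q \<le> a1" using lens X01 by simp
        thus ?thesis using B1[OF q0 qp ph a0 a0q _ True b0 b1n hb1 P10] by simp
      next
        case False
        hence "p \<le> a1" by simp
        thus ?thesis using B2[OF q0 qp ph a0 a0q _ a1 b0 b1n hb1 hb0] by simp
      qed
    qed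
  qed
qed



definition RR :: "real \<Rightarrow> real \<Rightarrow> real \<Rightarrow> real \<Rightarrow> bool" where
  "RR p q a b \<longleftrightarrow> 0 \<le> a \<and> a \<le> 1 \<and> 0 \<le> b \<and> b \<le> 1 \<and> a*b \<le> p*q \<and>
     (1-p)*(1-q)*a*b \<le> p*q*(1-a)*(1-b)"

lemma RR_base:
  assumes "0 \<le> p" "0 \<le> q"
  shows "RR p q 0 0" "RR p q 0 1" "RR p q 1 0"
  using assms unfolding RR_def by auto

lemma RR_down:
  assumes R: "RR p q a b" and p0: "0 \<le> p" and q0: "0 \<le> q" and pq1: "p + q \<le> 1"
    and "0 \<le> a'" "a' \<le> a" "0 \<le> b'" "b' \<le> b"
  shows "RR p q a' b'"
proof -
  have R': "0 \<le> a" "a \<le> 1" "0 \<le> b" "b \<le> 1" "a*b \<le> p*q" "(1-p)*(1-q)*a*b \<le> p*q*(1-a)*(1-b)"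
    using R unfolding RR_def by auto
  have ab: "a'*b' \<le> a*b" using assms by (intro mult_mono) auto
  have id: "\<And>x y. p*q*(1-x)*(1-y) - (1-p)*(1-q)*x*y = p*q - p*q*x - p*q*y - (1-p-q)*(x*y)"
    by (simp add: algebra_simps)
  have "p*q*a' \<le> p*q*a" "p*q*b' \<le> p*q*b" using assms by (auto intro!: mult_left_mono)
  moreover have "(1-p-q)*(a'*b') \<le> (1-p-q)*(a*b)" using ab pq1 by (intro mult_left_mono) auto
  ultimately have "p*q*(1-a)*(1-b) - (1-p)*(1-q)*a*b \<le> p*q*(1-a')*(1-b') - (1-p)*(1-q)*a'*b'"
    unfolding id by linarith
  thus ?thesis unfolding RR_def using R' ab assms by auto
qed

lemma RR_step:
  assumes q0: "0 < q" and qp: "q \<le> p" and ph: "p \<le> 1/2"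
    and R1: "RR p q a0 b1" and R2: "RR p q a1 b0" and a01: "a0 \<le> a1" and b01: "b0 \<le> b1"
  shows "RR p q ((1-p)*a0+p*a1) ((1-q)*b0+q*b1)"
proof -
  have h: "0 \<le> a0" "a1 \<le> 1" "0 \<le> b0" "b1 \<le> 1" "a0*b1 \<le> p*q" "a1*b0 \<le> p*q"
     "(1-p)*(1-q)*a0*b1 \<le> p*q*(1-a0)*(1-b1)" "(1-p)*(1-q)*a1*b0 \<le> p*q*(1-a1)*(1-b0)"
    using R1 R2 unfolding RR_def by auto
  have t1: "((1-p)*a0+p*a1)*((1-q)*b0+q*b1) \<le> p*q"
    using T1[OF q0 qp ph h(1) a01 h(2) h(3) b01 h(4) h(5) h(6) h(7) h(8)] .
  have t2: "(1-p)*(1-q)*((1-p)*a0+p*a1)*((1-q)*b0+q*b1)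
         \<le> p*q*(1-((1-p)*a0+p*a1))*(1-((1-q)*b0+q*b1))"
    using T2[OF q0 qp ph h(1) a01 h(2) h(3) b01 h(4) h(7) h(8)] .
  have "(1-p)*a0 \<le> (1-p)*a1" using a01 ph by (intro mult_left_mono) auto
  moreover have "0 \<le> (1-p)*a0" "0 \<le> p*a1" using h a01 ph qp q0 by auto
  ultimately have X: "0 \<le> (1-p)*a0+p*a1" "(1-p)*a0+p*a1 \<le> 1" using h by (auto simp: algebra_simps)
  have "(1-q)*b0 \<le> (1-q)*b1" using b01 ph qp by (intro mult_left_mono) auto
  moreover have "0 \<le> (1-q)*b0" "0 \<le> q*b1" using h b01 ph qp q0 by auto
  ultimately have Y: "0 \<le> (1-q)*b0+q*b1" "(1-q)*b0+q*b1 \<le> 1" using h by (auto simp: algebra_simps)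
  show ?thesis unfolding RR_def using X Y t1 t2 by auto
qed

lemma RR_closure:
  assumes q0: "0 < q" and qp: "q \<le> p" and ph: "p \<le> 1/2"
    and R00: "RR p q a0 b0" and R01: "RR p q a0 b1" and R10: "RR p q a1 b0"
    and al: "0 \<le> al" "al \<le> p" and be: "0 \<le> be" "be \<le> q"
  shows "RR p q ((1-al)*a0+al*a1) ((1-be)*b0+be*b1)"
proof -
  have p0: "0 \<le> p" and qq: "0 \<le> q" and pq1: "p + q \<le> 1" using q0 qp ph by auto
  have bnd: "0 \<le> a0" "a0 \<le> 1" "0 \<le> a1" "a1 \<le> 1" "0 \<le> b0" "b0 \<le> 1" "0 \<le> b1" "b1 \<le> 1"
    using R00 R01 R10 unfolding RR_def by auto
  define X where "X = (1-al)*a0+al*a1"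
  define Y where "Y = (1-be)*b0+be*b1"
  have al1: "al \<le> 1" and be1: "be \<le> 1" using al be qp ph by auto
  have Xlo: "0 \<le> X" unfolding X_def using bnd al al1 by auto
  have Ylo: "0 \<le> Y" unfolding Y_def using bnd be be1 by auto
  have Xmax: "X \<le> max a0 a1"
  proof -
    have "(1-al)*a0 \<le> (1-al)*max a0 a1" "al*a1 \<le> al*max a0 a1" using al al1 by (auto intro: mult_left_mono)
    thus ?thesis unfolding X_def by (simp add: algebra_simps)
  qed
  have Ymax: "Y \<le> max b0 b1"
  proof -
    have "(1-be)*b0 \<le> (1-be)*max b0 b1" "be*b1 \<le> be*max b0 b1" using be be1 by (auto intro: mult_left_mono)
    thus ?thesis unfolding Y_def by (simp add: algebra_simps)
  qed
  show ?thesis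
  proof (cases "a1 < a0")
    case True
    hence "X \<le> a0" using Xmax by simp
    moreover have "RR p q a0 (max b0 b1)" using R00 R01 by (cases "b0 \<le> b1") (auto simp: max_def)
    ultimately show ?thesis using RR_down[OF _ p0 qq pq1 Xlo _ Ylo Ymax] unfolding X_def Y_def by blast
  next
    case False
    hence a01: "a0 \<le> a1" by simp
    show ?thesis
    proof (cases "b1 < b0")
      case True
      hence "Y \<le> b0" using Ymax by simp
      moreover have "RR p q a1 b0" using R10 .
      moreover have "X \<le> a1" using Xmax a01 by simp
      ultimately show ?thesis using RR_down[OF _ p0 qq pq1 Xlo _ Ylo] unfolding X_def Y_def by blast
    next
      case False
      hence b01: "b0 \<le> b1" by simp
      have S: "RR p q ((1-p)*a0+p*a1) ((1-q)*b0+q*b1)" using RR_step[OF q0 qp ph R01 R10 a01 b01] .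
      have "al*(a1-a0) \<le> p*(a1-a0)" using al a01 by (intro mult_right_mono) auto
      hence "X \<le> (1-p)*a0+p*a1" unfolding X_def by (simp add: algebra_simps)
      moreover have "be*(b1-b0) \<le> q*(b1-b0)" using be b01 by (intro mult_right_mono) auto
      hence "Y \<le> (1-q)*b0+q*b1" unfolding Y_def by (simp add: algebra_simps)
      ultimately show ?thesis using RR_down[OF S p0 qq pq1 Xlo _ Ylo] unfolding X_def Y_def by blast
    qed
  qed
qed

lemma RR_prod: "RR p q a b \<Longrightarrow> a*b \<le> p*q" unfolding RR_def by simp


definition wt :: "nat set \<Rightarrow> (nat \<Rightarrow> real) \<Rightarrow> nat set \<Rightarrow> real" where
  "wt S a x = (\<Prod>l\<in>x. a l) * (\<Prod>k\<in>S - x. 1 - a k)"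
definition meas :: "nat set \<Rightarrow> (nat \<Rightarrow> real) \<Rightarrow> nat set set \<Rightarrow> real" where
  "meas S a U = (\<Sum>x\<in>U. wt S a x)"

lemma prod_measure_meas: "prod_measure n a U = meas {1..n} a U"
  unfolding prod_measure_def meas_def wt_def ..

lemma finite_family: "finite S \<Longrightarrow> U \<subseteq> Pow S \<Longrightarrow> finite U"
  by (meson finite_Pow_iff finite_subset)

lemma wt_nonneg:
  assumes "finite S" "x \<subseteq> S" "\<forall>l\<in>S. 0 \<le> a l \<and> a l \<le> 1"
  shows "0 \<le> wt S a x"
  unfolding wt_def using assms by (intro mult_nonneg_nonneg prod_nonneg) auto

lemma wt_pos:
  assumes "finite S" "x \<subseteq> S" "\<forall>l\<in>S. 0 < a l \<and> a l < 1"
  shows "0 < wt S a x"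
  unfolding wt_def using assms by (intro mult_pos_pos prod_pos) auto

lemma meas_split:
  assumes fS: "finite S" and lS: "l \<notin> S" and U: "U \<subseteq> Pow (insert l S)"
  shows "meas (insert l S) a U = (1 - a l) * meas S a {x\<in>U. l \<notin> x}
           + a l * meas S a ((\<lambda>x. x - {l}) ` {x\<in>U. l \<in> x})"
proof -
  have fin: "finite U" using finite_family[OF _ U] fS by simp
  have Ueq: "U = {x\<in>U. l\<notin>x} \<union> {x\<in>U. l\<in>x}" by auto
  have "meas (insert l S) a U = (\<Sum>x\<in>{x\<in>U. l\<notin>x}. wt (insert l S) a x) + (\<Sum>x\<in>{x\<in>U. l\<in>x}. wt (insert l S) a x)"
    unfolding meas_def by (subst Ueq) (rule sum.union_disjoint, use fin in auto)
  also have "(\<Sum>x\<in>{x\<in>U. l\<notin>x}. wt (insert l S) a x) = (1 - a l) * meas S a {x\<in>U. l\<notin>x}"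
    unfolding meas_def sum_distrib_left
  proof (rule sum.cong[OF refl])
    fix x assume x: "x \<in> {x\<in>U. l\<notin>x}"
    hence xS: "x \<subseteq> S" using U by auto
    have eq: "insert l S - x = insert l (S - x)" using x by auto
    have "(\<Prod>k\<in>insert l S - x. 1 - a k) = (1 - a l) * (\<Prod>k\<in>S - x. 1 - a k)"
      unfolding eq using fS lS by (simp add: prod.insert)
    thus "wt (insert l S) a x = (1 - a l) * wt S a x" unfolding wt_def by (simp add: ac_simps)
  qed
  also have "(\<Sum>x\<in>{x\<in>U. l\<in>x}. wt (insert l S) a x) = a l * meas S a ((\<lambda>x. x - {l}) ` {x\<in>U. l\<in>x})"
  proof -
    have inj: "inj_on (\<lambda>x. x - {l}) {x\<in>U. l\<in>x}"
      unfolding inj_on_def by (metis (mono_tags, lifting) insert_Diff mem_Collect_eq)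
    have "meas S a ((\<lambda>x. x - {l}) ` {x\<in>U. l\<in>x}) = (\<Sum>x\<in>{x\<in>U. l\<in>x}. wt S a (x - {l}))"
      unfolding meas_def using sum.reindex[OF inj, of "wt S a"] by (simp add: comp_def)
    moreover have "wt (insert l S) a x = a l * wt S a (x - {l})" if x: "x \<in> {x\<in>U. l\<in>x}" for x
    proof -
      have xS: "x - {l} \<subseteq> S" using x U by auto
      have fx: "finite (x - {l})" using xS fS finite_subset by blast
      have fx': "finite x" using fx by simp
      have "(\<Prod>k\<in>x. a k) = a l * (\<Prod>k\<in>x - {l}. a k)"
        using prod.remove[OF fx', of l a] x by simp
      moreover have "insert l S - x = S - (x - {l})" using x lS by auto
      ultimately show ?thesis unfolding wt_def by (simp add: ac_simps)
    qed
    ultimately show ?thesis by (simp add: sum_distrib_left)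
  qed
  finally show ?thesis .
qed

lemma meas_empty_ground:
  assumes "U \<subseteq> Pow {}"
  shows "meas {} a U = (if {} \<in> U then 1 else 0)"
proof -
  have "U = {} \<or> U = {{}}" using assms by auto
  thus ?thesis unfolding meas_def wt_def by auto
qed

lemma main_ineq:
  assumes q0: "0 < q" and qp: "q \<le> p" and ph: "p \<le> 1/2"
  shows "finite S \<Longrightarrow> U1 \<subseteq> Pow S \<Longrightarrow> U2 \<subseteq> Pow S \<Longrightarrow> cross_intersecting U1 U2 \<Longrightarrow>
    (\<forall>l\<in>S. 0 \<le> a l \<and> a l \<le> p \<and> 0 \<le> b l \<and> b l \<le> q) \<Longrightarrow> RR p q (meas S a U1) (meas S b U2)"
proof (induction S arbitrary: U1 U2 rule: finite_induct)
  case empty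
  have p0: "0 \<le> p" "0 \<le> q" using q0 qp by auto
  have "\<not> ({} \<in> U1 \<and> {} \<in> U2)" using empty.prems(3) unfolding cross_intersecting_def by auto
  thus ?case using RR_base[OF p0] meas_empty_ground[OF empty.prems(1)] meas_empty_ground[OF empty.prems(2)]
    by auto
next
  case (insert l S)
  define A0 where "A0 = {x\<in>U1. l \<notin> x}"
  define A1 where "A1 = (\<lambda>x. x - {l}) ` {x\<in>U1. l \<in> x}"
  define B0 where "B0 = {x\<in>U2. l \<notin> x}"
  define B1 where "B1 = (\<lambda>x. x - {l}) ` {x\<in>U2. l \<in> x}"
  have sub: "A0 \<subseteq> Pow S" "A1 \<subseteq> Pow S" "B0 \<subseteq> Pow S" "B1 \<subseteq> Pow S"
    using insert.prems(1,2) unfolding A0_def A1_def B0_def B1_def by auto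
  have ci: "cross_intersecting A0 B0" "cross_intersecting A0 B1" "cross_intersecting A1 B0"
    using insert.prems(3) unfolding cross_intersecting_def A0_def A1_def B0_def B1_def by blast+
  have ab: "\<forall>l\<in>S. 0 \<le> a l \<and> a l \<le> p \<and> 0 \<le> b l \<and> b l \<le> q" using insert.prems(4) by auto
  have R00: "RR p q (meas S a A0) (meas S b B0)" using insert.IH[OF sub(1) sub(3) ci(1) ab] .
  have R01: "RR p q (meas S a A0) (meas S b B1)" using insert.IH[OF sub(1) sub(4) ci(2) ab] .
  have R10: "RR p q (meas S a A1) (meas S b B0)" using insert.IH[OF sub(2) sub(3) ci(3) ab] .
  have al: "0 \<le> a l" "a l \<le> p" and be: "0 \<le> b l" "b l \<le> q" using insert.prems(4) by auto
  have m1: "meas (insert l S) a U1 = (1 - a l) * meas S a A0 + a l * meas S a A1"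
    unfolding A0_def A1_def using meas_split[OF insert.hyps(1,2) insert.prems(1)] .
  have m2: "meas (insert l S) b U2 = (1 - b l) * meas S b B0 + b l * meas S b B1"
    unfolding B0_def B1_def using meas_split[OF insert.hyps(1,2) insert.prems(2)] .
  show ?case unfolding m1 m2 using RR_closure[OF q0 qp ph R00 R01 R10 al be] .
qed


lemma ineq_gen:
  assumes q0: "0 < q" and qp: "q \<le> p" and ph: "p \<le> 1/2" and fS: "finite S"
    and U1: "U1 \<subseteq> Pow S" and U2: "U2 \<subseteq> Pow S" and ci: "cross_intersecting U1 U2"
    and ab: "\<forall>l\<in>S. 0 \<le> a l \<and> a l \<le> p \<and> 0 \<le> b l \<and> b l \<le> q"
  shows "meas S a U1 * meas S b U2 \<le> p*q" "0 \<le> meas S a U1" "0 \<le> meas S b U2"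
  using main_ineq[OF q0 qp ph fS U1 U2 ci ab] unfolding RR_def by auto

lemma meas_cong:
  assumes "\<forall>l\<in>S. a l = a' l" "U \<subseteq> Pow S"
  shows "meas S a U = meas S a' U"
  unfolding meas_def wt_def
proof (rule sum.cong[OF refl])
  fix x assume "x \<in> U"
  hence xS: "x \<subseteq> S" using assms by auto
  have "(\<Prod>l\<in>x. a l) = (\<Prod>l\<in>x. a' l)" using xS assms by (intro prod.cong) auto
  moreover have "(\<Prod>k\<in>S - x. 1 - a k) = (\<Prod>k\<in>S - x. 1 - a' k)" using assms by (intro prod.cong) auto
  ultimately show "(\<Prod>l\<in>x. a l) * (\<Prod>k\<in>S - x. 1 - a k) = (\<Prod>l\<in>x. a' l) * (\<Prod>k\<in>S - x. 1 - a' k)"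
    by simp
qed

lemma meas_mono:
  assumes fS: "finite S" and "V \<subseteq> V'" "V' \<subseteq> Pow S" "\<forall>l\<in>S. 0 \<le> a l \<and> a l \<le> 1"
  shows "meas S a V \<le> meas S a V'"
  unfolding meas_def
proof (rule sum_mono2)
  show "finite V'" using finite_family[OF fS assms(3)] .
  show "V \<subseteq> V'" by fact
  show "\<And>b. b \<in> V' - V \<Longrightarrow> 0 \<le> wt S a b" using wt_nonneg[OF fS] assms by blast
qed

lemma meas_strict:
  assumes fS: "finite S" and "V \<subseteq> V'" "V' \<subseteq> Pow S" "\<forall>l\<in>S. 0 < a l \<and> a l < 1" "V \<noteq> V'"
  shows "meas S a V < meas S a V'"
proof -
  obtain y where y: "y \<in> V'" "y \<notin> V" using assms by blast
  have fin: "finite V'" using finite_family[OF fS assms(3)] .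
  have "sum (wt S a) V < sum (wt S a) V'"
  proof (rule sum_strict_mono2[OF fin assms(2)])
    show "y \<in> V' - V" using y by simp
    show "0 < wt S a y" using wt_pos[OF fS _ assms(4)] y assms(3) by blast
    show "\<And>x. x \<in> V' \<Longrightarrow> 0 \<le> wt S a x" using wt_pos[OF fS _ assms(4)] assms(3) by (auto intro: less_imp_le)
  qed
  thus ?thesis unfolding meas_def .
qed

lemma meas_nonneg:
  assumes "finite S" "V \<subseteq> Pow S" "\<forall>l\<in>S. 0 \<le> a l \<and> a l \<le> 1"
  shows "0 \<le> meas S a V"
  unfolding meas_def using wt_nonneg[OF assms(1) _ assms(3)] assms(2) by (auto intro: sum_nonneg)

lemma cross_sym: "cross_intersecting U1 U2 \<Longrightarrow> cross_intersecting U2 U1"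
  unfolding cross_intersecting_def by blast

lemma down_remove:
  assumes "finite T" "\<forall>l\<in>T. \<forall>x\<in>U. x - {l} \<in> U" "x \<in> U"
  shows "x - T \<in> U"
  using assms
proof (induction T rule: finite_induct)
  case empty thus ?case by simp
next
  case (insert l T)
  have "x - T \<in> U" using insert by auto
  hence "(x - T) - {l} \<in> U" using insert.prems(1) by auto
  moreover have "x - insert l T = (x - T) - {l}" by auto
  ultimately show ?case by simp
qed

lemma eq_struct:
  fixes p q :: real and S :: "nat set" and al be :: "nat \<Rightarrow> real"
  assumes q0: "0 < q" and qp: "q \<le> p" and ph: "p \<le> 1/2" and fS: "finite S"
    and apos: "\<forall>l\<in>S. 0 < al l \<and> al l < 1" and bpos: "\<forall>l\<in>S. 0 < be l \<and> be l < 1"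
    and ale: "\<forall>l\<in>S. al l \<le> p" and ble: "\<forall>l\<in>S. be l \<le> q"
    and U1: "U1 \<subseteq> Pow S" and U2: "U2 \<subseteq> Pow S" and ci: "cross_intersecting U1 U2"
    and eq: "meas S al U1 * meas S be U2 = p*q"
  shows "\<forall>x\<in>Pow S. x \<in> U1 \<longleftrightarrow> x \<inter> {l\<in>S. al l = p \<and> be l = q} \<in> U1"
    and "\<forall>x\<in>Pow S. x \<in> U2 \<longleftrightarrow> x \<inter> {l\<in>S. al l = p \<and> be l = q} \<in> U2"
proof -
  define W where "W = {l\<in>S. al l = p \<and> be l = q}"
  have ab: "\<forall>l\<in>S. 0 \<le> al l \<and> al l \<le> p \<and> 0 \<le> be l \<and> be l \<le> q"
    using apos bpos ale ble by (auto intro: less_imp_le)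
  have al01: "\<forall>l\<in>S. 0 \<le> al l \<and> al l \<le> 1" and be01: "\<forall>l\<in>S. 0 \<le> be l \<and> be l \<le> 1"
    using apos bpos by (auto intro: less_imp_le)
  define m1 where "m1 = meas S al U1"
  define m2 where "m2 = meas S be U2"
  have pq: "0 < p*q" using q0 qp by simp
  have m1n: "0 \<le> m1" unfolding m1_def using meas_nonneg[OF fS U1 al01] .
  have m2n: "0 \<le> m2" unfolding m2_def using meas_nonneg[OF fS U2 be01] .
  have eq': "m1*m2 = p*q" using eq unfolding m1_def m2_def .
  have m1pos: "0 < m1" and m2pos: "0 < m2"
    using eq' pq m1n m2n by (auto simp: zero_less_mult_iff order_le_less)
  have max1: "V = U1" if V: "U1 \<subseteq> V" "V \<subseteq> Pow S" "cross_intersecting V U2" for V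
  proof (rule ccontr)
    assume ne: "V \<noteq> U1"
    have "m1 < meas S al V" unfolding m1_def using meas_strict[OF fS V(1) V(2) apos] ne by simp
    hence "m1*m2 < meas S al V * m2" using m2pos by simp
    moreover have "meas S al V * m2 \<le> p*q"
      unfolding m2_def using ineq_gen(1)[OF q0 qp ph fS V(2) U2 V(3) ab] .
    ultimately show False using eq' by simp
  qed
  have max2: "V = U2" if V: "U2 \<subseteq> V" "V \<subseteq> Pow S" "cross_intersecting U1 V" for V
  proof (rule ccontr)
    assume ne: "V \<noteq> U2"
    have "m2 < meas S be V" unfolding m2_def using meas_strict[OF fS V(1) V(2) bpos] ne by simp
    hence "m1*m2 < m1 * meas S be V" using m1pos by simp
    moreover have "m1 * meas S be V \<le> p*q"
      unfolding m1_def using ineq_gen(1)[OF q0 qp ph fS U1 V(2) V(3) ab] .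
    ultimately show False using eq' by simp
  qed
  have mx1: "x \<in> U1" if "x \<subseteq> S" "\<forall>y\<in>U2. x \<inter> y \<noteq> {}" for x
  proof -
    have "insert x U1 = U1"
      by (rule max1) (use that U1 ci in \<open>auto simp: cross_intersecting_def\<close>)
    thus ?thesis by auto
  qed
  have mx2: "y \<in> U2" if "y \<subseteq> S" "\<forall>x\<in>U1. x \<inter> y \<noteq> {}" for y
  proof -
    have "insert y U2 = U2"
      by (rule max2) (use that U2 ci in \<open>auto simp: cross_intersecting_def\<close>)
    thus ?thesis by auto
  qed
  have up1: "x \<in> U1" if "y \<in> U1" "y \<subseteq> x" "x \<subseteq> S" for x y
    using mx1[of x] that ci unfolding cross_intersecting_def by blast
  have up2: "x \<in> U2" if "y \<in> U2" "y \<subseteq> x" "x \<subseteq> S" for x y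
    using mx2[of x] that ci unfolding cross_intersecting_def by blast
  have dn: "(\<forall>x\<in>U1. x - {l} \<in> U1) \<and> (\<forall>x\<in>U2. x - {l} \<in> U2)" if lS: "l \<in> S" and lW: "l \<notin> W" for l
  proof -
    define S0 where "S0 = S - {l}"
    have SS: "S = insert l S0" "l \<notin> S0" "finite S0" using lS fS unfolding S0_def by auto
    define al' where "al' = al(l := p)"
    define be' where "be' = be(l := q)"
    have ab': "\<forall>k\<in>S. 0 \<le> al' k \<and> al' k \<le> p \<and> 0 \<le> be' k \<and> be' k \<le> q"
      using ab q0 qp unfolding al'_def be'_def by auto
    have I: "meas S al' U1 * meas S be' U2 \<le> p*q" using ineq_gen(1)[OF q0 qp ph fS U1 U2 ci ab'] .
    define A0 where "A0 = {x\<in>U1. l \<notin> x}"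
    define A1 where "A1 = (\<lambda>x. x - {l}) ` {x\<in>U1. l \<in> x}"
    define B0 where "B0 = {x\<in>U2. l \<notin> x}"
    define B1 where "B1 = (\<lambda>x. x - {l}) ` {x\<in>U2. l \<in> x}"
    have U1': "U1 \<subseteq> Pow (insert l S0)" and U2': "U2 \<subseteq> Pow (insert l S0)" using U1 U2 SS by auto
    have subs: "A0 \<subseteq> Pow S0" "A1 \<subseteq> Pow S0" "B0 \<subseteq> Pow S0" "B1 \<subseteq> Pow S0"
      using U1 U2 unfolding A0_def A1_def B0_def B1_def S0_def by auto
    have A01: "A0 \<subseteq> A1"
    proof
      fix x assume "x \<in> A0"
      hence x: "x \<in> U1" "l \<notin> x" unfolding A0_def by auto
      have "insert l x \<in> U1" using up1[OF x(1)] x U1 lS by auto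
      moreover have "x = insert l x - {l}" using x by auto
      ultimately show "x \<in> A1" unfolding A1_def by blast
    qed
    have B01: "B0 \<subseteq> B1"
    proof
      fix x assume "x \<in> B0"
      hence x: "x \<in> U2" "l \<notin> x" unfolding B0_def by auto
      have "insert l x \<in> U2" using up2[OF x(1)] x U2 lS by auto
      moreover have "x = insert l x - {l}" using x by auto
      ultimately show "x \<in> B1" unfolding B1_def by blast
    qed
    have al0: "\<forall>k\<in>S0. 0 \<le> al k \<and> al k \<le> 1" "\<forall>k\<in>S0. 0 < al k \<and> al k < 1"
      using al01 apos SS by auto
    have be0: "\<forall>k\<in>S0. 0 \<le> be k \<and> be k \<le> 1" "\<forall>k\<in>S0. 0 < be k \<and> be k < 1"
      using be01 bpos SS by auto
    have cong1: "meas S0 al' V = meas S0 al V" if "V \<subseteq> Pow S0" for V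
      using meas_cong[OF _ that] SS unfolding al'_def by auto
    have cong2: "meas S0 be' V = meas S0 be V" if "V \<subseteq> Pow S0" for V
      using meas_cong[OF _ that] SS unfolding be'_def by auto
    define a0 where "a0 = meas S0 al A0"
    define a1 where "a1 = meas S0 al A1"
    define b0 where "b0 = meas S0 be B0"
    define b1 where "b1 = meas S0 be B1"
    have sp1: "m1 = (1 - al l)*a0 + al l*a1"
      unfolding m1_def a0_def a1_def A0_def A1_def using meas_split[OF SS(3,2) U1'] SS(1) by simp
    have sp2: "m2 = (1 - be l)*b0 + be l*b1"
      unfolding m2_def b0_def b1_def B0_def B1_def using meas_split[OF SS(3,2) U2'] SS(1) by simp
    have sp1': "meas S al' U1 = (1 - p)*a0 + p*a1"
      using meas_split[OF SS(3,2) U1', of al'] SS(1) cong1[OF subs(1)] cong1[OF subs(2)]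
      unfolding a0_def a1_def A0_def A1_def al'_def by simp
    have sp2': "meas S be' U2 = (1 - q)*b0 + q*b1"
      using meas_split[OF SS(3,2) U2', of be'] SS(1) cong2[OF subs(3)] cong2[OF subs(4)]
      unfolding b0_def b1_def B0_def B1_def be'_def by simp
    have a01: "a0 \<le> a1" unfolding a0_def a1_def using meas_mono[OF SS(3) A01 subs(2) al0(1)] .
    have b01: "b0 \<le> b1" unfolding b0_def b1_def using meas_mono[OF SS(3) B01 subs(4) be0(1)] .
    have alp: "al l \<le> p" and bep: "be l \<le> q" using ab lS by auto
    define m1' where "m1' = meas S al' U1"
    define m2' where "m2' = meas S be' U2"
    have e1: "m1' = m1 + (p - al l)*(a1 - a0)" unfolding m1'_def sp1' sp1 by (simp add: algebra_simps)
    have e2: "m2' = m2 + (q - be l)*(b1 - b0)" unfolding m2'_def sp2' sp2 by (simp add: algebra_simps)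
    have g1: "m1 \<le> m1'" using e1 alp a01 by simp
    have g2: "m2 \<le> m2'" using e2 bep b01 by simp
    have I': "m1'*m2' \<le> m1*m2" using I eq' unfolding m1'_def m2'_def by simp
    have "m1'*m2 \<le> m1'*m2'" using g2 g1 m1pos by (intro mult_left_mono) auto
    hence "m1'*m2 \<le> m1*m2" using I' by simp
    hence q1: "m1' = m1" using g1 m2pos by (simp add: mult_le_cancel_right)
    hence "m1*m2' \<le> m1*m2" using I' by simp
    hence q2: "m2' = m2" using g2 m1pos by (simp add: mult_le_cancel_left)
    have z1: "(p - al l)*(a1 - a0) = 0" using q1 e1 by simp
    have z2: "(q - be l)*(b1 - b0) = 0" using q2 e2 by simp
    have from1: "\<forall>y\<in>U2. y - {l} \<in> U2" if h1: "\<forall>x\<in>U1. x - {l} \<in> U1"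
    proof
      fix y assume y: "y \<in> U2"
      show "y - {l} \<in> U2"
      proof (rule mx2)
        show "y - {l} \<subseteq> S" using y U2 by auto
        show "\<forall>x\<in>U1. x \<inter> (y - {l}) \<noteq> {}"
        proof
          fix x assume x: "x \<in> U1"
          have "(x - {l}) \<inter> y \<noteq> {}" using h1 x y ci unfolding cross_intersecting_def by blast
          thus "x \<inter> (y - {l}) \<noteq> {}" by blast
        qed
      qed
    qed
    have from2: "\<forall>x\<in>U1. x - {l} \<in> U1" if h2: "\<forall>y\<in>U2. y - {l} \<in> U2"
    proof
      fix x assume x: "x \<in> U1"
      show "x - {l} \<in> U1"
      proof (rule mx1)
        show "x - {l} \<subseteq> S" using x U1 by auto
        show "\<forall>y\<in>U2. (x - {l}) \<inter> y \<noteq> {}"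
        proof
          fix y assume y: "y \<in> U2"
          have "x \<inter> (y - {l}) \<noteq> {}" using h2 x y ci unfolding cross_intersecting_def by blast
          thus "(x - {l}) \<inter> y \<noteq> {}" by blast
        qed
      qed
    qed
    show ?thesis
    proof (cases "al l = p")
      case False
      hence "a1 = a0" using z1 by simp
      hence "A0 = A1"
      proof (rule contrapos_pp)
        assume "A0 \<noteq> A1"
        hence "a0 < a1" unfolding a0_def a1_def using meas_strict[OF SS(3) A01 subs(2) al0(2)] by simp
        thus "a1 \<noteq> a0" by simp
      qed
      have h1: "\<forall>x\<in>U1. x - {l} \<in> U1"
      proof
        fix x assume x: "x \<in> U1"
        show "x - {l} \<in> U1"
        proof (cases "l \<in> x")
          case True
          hence "x - {l} \<in> A1" unfolding A1_def using x by blast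
          hence "x - {l} \<in> A0" using \<open>A0 = A1\<close> by simp
          thus ?thesis unfolding A0_def by simp
        next
          case False thus ?thesis using x by simp
        qed
      qed
      show ?thesis using h1 from1[OF h1] by simp
    next
      case True
      hence "be l \<noteq> q" using lW lS unfolding W_def by simp
      hence "b1 = b0" using z2 by simp
      hence "B0 = B1"
      proof (rule contrapos_pp)
        assume "B0 \<noteq> B1"
        hence "b0 < b1" unfolding b0_def b1_def using meas_strict[OF SS(3) B01 subs(4) be0(2)] by simp
        thus "b1 \<noteq> b0" by simp
      qed
      have h2: "\<forall>y\<in>U2. y - {l} \<in> U2"
      proof
        fix x assume x: "x \<in> U2"
        show "x - {l} \<in> U2"
        proof (cases "l \<in> x")
          case True
          hence "x - {l} \<in> B1" unfolding B1_def using x by blast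
          hence "x - {l} \<in> B0" using \<open>B0 = B1\<close> by simp
          thus ?thesis unfolding B0_def by simp
        next
          case False thus ?thesis using x by simp
        qed
      qed
      show ?thesis using h2 from2[OF h2] by simp
    qed
  qed
  have fT: "finite (S - W)" using fS by simp
  have dn1: "\<forall>l\<in>S - W. \<forall>x\<in>U1. x - {l} \<in> U1" using dn by simp
  have dn2: "\<forall>l\<in>S - W. \<forall>x\<in>U2. x - {l} \<in> U2" using dn by simp
  have res1: "x \<in> U1 \<longleftrightarrow> x \<inter> W \<in> U1" if x: "x \<subseteq> S" for x
  proof
    assume "x \<in> U1"
    hence "x - (S - W) \<in> U1" using down_remove[OF fT dn1] by simp
    moreover have "x - (S - W) = x \<inter> W" using x by blast
    ultimately show "x \<inter> W \<in> U1" by simp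
  next
    assume "x \<inter> W \<in> U1"
    thus "x \<in> U1" using up1[of "x \<inter> W" x] x by simp
  qed
  have res2: "x \<in> U2 \<longleftrightarrow> x \<inter> W \<in> U2" if x: "x \<subseteq> S" for x
  proof
    assume "x \<in> U2"
    hence "x - (S - W) \<in> U2" using down_remove[OF fT dn2] by simp
    moreover have "x - (S - W) = x \<inter> W" using x by blast
    ultimately show "x \<inter> W \<in> U2" by simp
  next
    assume "x \<inter> W \<in> U2"
    thus "x \<in> U2" using up2[of "x \<inter> W" x] x by simp
  qed
  show "\<forall>x\<in>Pow S. x \<in> U1 \<longleftrightarrow> x \<inter> {l\<in>S. al l = p \<and> be l = q} \<in> U1" using res1 unfolding W_def by simp
  show "\<forall>x\<in>Pow S. x \<in> U2 \<longleftrightarrow> x \<inter> {l\<in>S. al l = p \<and> be l = q} \<in> U2" using res2 unfolding W_def by simp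
qed

lemma meas_reduce_gen:
  assumes "finite T" "T \<inter> W = {}" "finite W"
  shows "U \<subseteq> Pow (W \<union> T) \<Longrightarrow> (\<forall>x\<in>Pow (W \<union> T). x \<in> U \<longleftrightarrow> x \<inter> W \<in> U) \<Longrightarrow>
    meas (W \<union> T) a U = meas W a {x\<in>U. x \<subseteq> W}"
  using assms
proof (induction T arbitrary: U rule: finite_induct)
  case empty
  have "{x\<in>U. x \<subseteq> W} = U" using empty.prems(1) by auto
  thus ?case by simp
next
  case (insert l T)
  define S' where "S' = W \<union> T"
  have lS': "l \<notin> S'" using insert.hyps(2) insert.prems(3) unfolding S'_def by auto
  have lW: "l \<notin> W" using insert.prems(3) by auto
  have fS': "finite S'" using insert.hyps(1) insert.prems(4) unfolding S'_def by simp
  have SS: "W \<union> insert l T = insert l S'" unfolding S'_def by auto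
  have U: "U \<subseteq> Pow (insert l S')" using insert.prems(1) SS by simp
  have iff: "\<forall>x\<in>Pow (insert l S'). x \<in> U \<longleftrightarrow> x \<inter> W \<in> U" using insert.prems(2) SS by simp
  define U0 where "U0 = {x\<in>U. l \<notin> x}"
  have img: "(\<lambda>x. x - {l}) ` {x\<in>U. l \<in> x} = U0"
  proof
    show "(\<lambda>x. x - {l}) ` {x\<in>U. l \<in> x} \<subseteq> U0"
    proof
      fix y assume "y \<in> (\<lambda>x. x - {l}) ` {x\<in>U. l \<in> x}"
      then obtain x where x: "x \<in> U" "l \<in> x" "y = x - {l}" by blast
      have xS: "x \<subseteq> insert l S'" using x U by auto
      have "x \<inter> W \<in> U" using iff xS x by auto
      moreover have "y \<inter> W = x \<inter> W" using x lW by auto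
      moreover have "y \<subseteq> insert l S'" using xS x by auto
      ultimately have "y \<in> U" using iff by auto
      thus "y \<in> U0" unfolding U0_def using x by auto
    qed
  next
    show "U0 \<subseteq> (\<lambda>x. x - {l}) ` {x\<in>U. l \<in> x}"
    proof
      fix y assume y: "y \<in> U0"
      hence yU: "y \<in> U" "l \<notin> y" unfolding U0_def by auto
      have yS: "insert l y \<subseteq> insert l S'" using yU U by auto
      have "y \<inter> W \<in> U" using iff yU U by auto
      moreover have "insert l y \<inter> W = y \<inter> W" using lW by auto
      ultimately have "insert l y \<in> U" using iff yS by auto
      moreover have "y = insert l y - {l}" using yU by auto
      ultimately show "y \<in> (\<lambda>x. x - {l}) ` {x\<in>U. l \<in> x}" by blast
    qed
  qed
  have "meas (insert l S') a U = (1 - a l) * meas S' a U0 + a l * meas S' a U0"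
    using meas_split[OF fS' lS' U] img unfolding U0_def by simp
  hence m: "meas (insert l S') a U = meas S' a U0" by (simp add: algebra_simps)
  have U0S: "U0 \<subseteq> Pow (W \<union> T)" using U unfolding U0_def S'_def by auto
  have iff0: "\<forall>x\<in>Pow (W \<union> T). x \<in> U0 \<longleftrightarrow> x \<inter> W \<in> U0"
  proof
    fix x assume x: "x \<in> Pow (W \<union> T)"
    hence lx: "l \<notin> x" using lS' unfolding S'_def by auto
    have "x \<in> Pow (insert l S')" using x unfolding S'_def by auto
    hence "x \<in> U \<longleftrightarrow> x \<inter> W \<in> U" using iff by blast
    thus "x \<in> U0 \<longleftrightarrow> x \<inter> W \<in> U0" unfolding U0_def using lx by auto
  qed
  have IH: "meas (W \<union> T) a U0 = meas W a {x\<in>U0. x \<subseteq> W}"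
    using insert.IH[OF U0S iff0] insert.prems(3,4) by auto
  have "{x\<in>U0. x \<subseteq> W} = {x\<in>U. x \<subseteq> W}" unfolding U0_def using lW by auto
  thus ?case using m IH SS unfolding S'_def by simp
qed

lemma meas_reduce:
  assumes "finite S" "W \<subseteq> S" "U \<subseteq> Pow S" "\<forall>x\<in>Pow S. x \<in> U \<longleftrightarrow> x \<inter> W \<in> U"
  shows "meas S a U = meas W a {x\<in>U. x \<subseteq> W}"
proof -
  have S: "S = W \<union> (S - W)" using assms by auto
  have fW: "finite W" using assms finite_subset by blast
  show ?thesis using meas_reduce_gen[of "S - W" W U a] assms fW S by auto
qed

lemma meas_half:
  assumes fW: "finite W" and h: "\<forall>l\<in>W. a l = 1/2" and V: "V \<subseteq> Pow W"
  shows "meas W a V = real (card V) / 2 ^ card W"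
proof -
  have "wt W a x = (1/2) ^ card W" if x: "x \<in> V" for x
  proof -
    have xW: "x \<subseteq> W" using x V by auto
    have fx: "finite x" using xW fW finite_subset by blast
    have "(\<Prod>l\<in>x. a l) = (\<Prod>l\<in>x. 1/2)" by (rule prod.cong) (use h xW in auto)
    hence p1: "(\<Prod>l\<in>x. a l) = (1/2) ^ card x" by simp
    have "(\<Prod>k\<in>W - x. 1 - a k) = (\<Prod>k\<in>W - x. 1/2)" by (rule prod.cong) (use h in auto)
    hence p2: "(\<Prod>k\<in>W - x. 1 - a k) = (1/2) ^ card (W - x)" by simp
    note p1 p2
    moreover have "card x + card (W - x) = card W" using xW fW fx
      by (metis card_Diff_subset card_mono le_add_diff_inverse)
    ultimately show ?thesis unfolding wt_def by (metis power_add)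
  qed
  hence "meas W a V = (\<Sum>x\<in>V. (1/2) ^ card W)" unfolding meas_def by (intro sum.cong) auto
  also have "\<dots> = real (card V) * (1/2) ^ card W" by simp
  finally show ?thesis by (simp add: power_one_over)
qed

lemma card_cross:
  assumes fW: "finite W" and V1: "V1 \<subseteq> Pow W" and V2: "V2 \<subseteq> Pow W"
    and ci: "cross_intersecting V1 V2"
  shows "card V1 + card V2 \<le> 2 ^ card W"
proof -
  have inj: "inj_on (\<lambda>x. W - x) V1" using V1 unfolding inj_on_def by blast
  have im: "(\<lambda>x. W - x) ` V1 \<subseteq> Pow W - V2"
  proof
    fix y assume "y \<in> (\<lambda>x. W - x) ` V1"
    then obtain x where x: "x \<in> V1" "y = W - x" by blast
    have "y \<notin> V2"
    proof
      assume "y \<in> V2"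
      hence "x \<inter> y \<noteq> {}" using ci x unfolding cross_intersecting_def by blast
      thus False using x by blast
    qed
    thus "y \<in> Pow W - V2" using x by blast
  qed
  have fP: "finite (Pow W)" using fW by simp
  have "card V1 = card ((\<lambda>x. W - x) ` V1)" using card_image[OF inj] by simp
  also have "\<dots> \<le> card (Pow W - V2)" using im fP by (intro card_mono) auto
  also have "\<dots> = card (Pow W) - card V2" using V2 fP by (simp add: card_Diff_subset finite_subset)
  also have "\<dots> = 2 ^ card W - card V2" using fW by (simp add: card_Pow)
  finally have "card V1 \<le> 2 ^ card W - card V2" .
  moreover have "card V2 \<le> 2 ^ card W" using card_mono[OF fP V2] fW by (simp add: card_Pow)
  ultimately show ?thesis by linarith
qed

lemma half_card:
  fixes v1 v2 k :: nat
  assumes k: "1 \<le> k" and s: "v1 + v2 \<le> 2^k"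
    and pr: "(real v1 / 2^k) * (real v2 / 2^k) = 1/4"
  shows "v1 = 2^(k-1)" "v2 = 2^(k-1)"
proof -
  define N :: real where "N = 2^k"
  have Np: "0 < N" unfolding N_def by simp
  have prod: "real v1 * real v2 = N*N/4" using pr Np unfolding N_def by (simp add: field_simps)
  have sr: "real v1 + real v2 \<le> N" using s unfolding N_def by (metis of_nat_add of_nat_le_iff of_nat_numeral of_nat_power)
  have sq: "(real v1 - real v2)^2 = (real v1 + real v2)^2 - N*N" using prod by (simp add: power2_eq_square algebra_simps)
  have sq': "(real v1 - real v2)*(real v1 - real v2) = (real v1 + real v2)*(real v1 + real v2) - N*N"
    using sq by (simp add: power2_eq_square)
  have "0 \<le> (real v1 - real v2)*(real v1 - real v2)" by simp
  hence "N*N \<le> (real v1 + real v2)*(real v1 + real v2)" using sq' by linarith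
  hence "N^2 \<le> (real v1 + real v2)^2" by (simp add: power2_eq_square)
  hence "N \<le> real v1 + real v2" by (rule power2_le_imp_le) simp
  hence sN: "real v1 + real v2 = N" using sr by simp
  hence "(real v1 - real v2)^2 = 0" using sq by (simp add: power2_eq_square)
  hence eqv: "real v1 = real v2" by simp
  hence "real v1 = N/2" using sN by simp
  moreover have "N/2 = real (2^(k-1))"
  proof -
    obtain j where j: "k = Suc j" using k by (cases k) auto
    show ?thesis unfolding N_def j by simp
  qed
  ultimately have "real v1 = real (2^(k-1))" by simp
  thus "v1 = 2^(k-1)" by (simp only: of_nat_eq_iff)
  thus "v2 = 2^(k-1)" using eqv by simp
qed

lemma set_form:
  assumes U: "U \<subseteq> Pow S" and w: "w \<subseteq> S" and iff: "\<forall>x\<in>Pow S. x \<in> U \<longleftrightarrow> x \<inter> w \<in> U"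
  shows "U = {x \<union> y | x y. x \<in> restr U w \<and> y \<in> Pow (S - w)}"
proof
  show "U \<subseteq> {x \<union> y | x y. x \<in> restr U w \<and> y \<in> Pow (S - w)}"
  proof
    fix z assume z: "z \<in> U"
    have "z = (z \<inter> w) \<union> (z - w)" by blast
    moreover have "z \<inter> w \<in> restr U w" unfolding restr_def using z by blast
    moreover have "z - w \<in> Pow (S - w)" using z U by blast
    ultimately show "z \<in> {x \<union> y | x y. x \<in> restr U w \<and> y \<in> Pow (S - w)}" by blast
  qed
next
  show "{x \<union> y | x y. x \<in> restr U w \<and> y \<in> Pow (S - w)} \<subseteq> U"
  proof
    fix t assume "t \<in> {x \<union> y | x y. x \<in> restr U w \<and> y \<in> Pow (S - w)}"
    then obtain z y where zy: "z \<in> U" "y \<subseteq> S - w" "t = (z \<inter> w) \<union> y" unfolding restr_def by blast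
    have zS: "z \<subseteq> S" using zy U by blast
    have tS: "t \<subseteq> S" using zy zS w by blast
    have "t \<inter> w = z \<inter> w" using zy by blast
    moreover have "z \<inter> w \<in> U" using iff zy zS by blast
    ultimately show "t \<in> U" using iff tS by auto
  qed
qed
theorem lemma2:
  fixes n :: nat and p1 p2 :: "nat \<Rightarrow> real" and U1 U2 :: "nat set set" and w :: "nat set"
  assumes "n \<ge> 1"
    and "prob_vector n p1" and "prob_vector n p2"
    and "p1 1 = Max (p1 ` {1..n})" and "p2 1 = Max (p2 ` {1..n})"
    and "p1 1 \<ge> p2 1" and "p1 1 \<le> 1/2"
    and "w = {l\<in>{1..n}. p1 l = p1 1 \<and> p2 l = p2 1}"
    and "U1 \<subseteq> Pow {1..n}" and "U2 \<subseteq> Pow {1..n}"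
    and "cross_intersecting U1 U2"
    and "prod_measure n p1 U1 * prod_measure n p2 U2 = p1 1 * p2 1"
  shows "U1 = {x \<union> y | x y. x \<in> restr U1 w \<and> y \<in> Pow ({1..n} - w)}
       \<and> U2 = {x \<union> y | x y. x \<in> restr U2 w \<and> y \<in> Pow ({1..n} - w)}
       \<and> (\<forall>x\<in>Pow {1..n}. x \<in> U1 \<longleftrightarrow> x \<inter> w \<in> U1)
       \<and> (\<forall>x\<in>Pow {1..n}. x \<in> U2 \<longleftrightarrow> x \<inter> w \<in> U2)
       \<and> cross_intersecting (restr U1 w) (restr U2 w)
       \<and> (p1 1 = 1/2 \<and> p2 1 = 1/2 \<longrightarrow>
            card (restr U1 w) = 2 ^ (card w - 1) \<and> card (restr U2 w) = 2 ^ (card w - 1))"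
proof -
  define S where "S = {1..n::nat}"
  have fS: "finite S" unfolding S_def by simp
  have oneS: "1 \<in> S" unfolding S_def using assms(1) by simp
  define p where "p = p1 1"
  define q where "q = p2 1"
  have apos: "\<forall>l\<in>S. 0 < p1 l \<and> p1 l < 1" using assms(2) unfolding prob_vector_def S_def .
  have bpos: "\<forall>l\<in>S. 0 < p2 l \<and> p2 l < 1" using assms(3) unfolding prob_vector_def S_def .
  have ale: "\<forall>l\<in>S. p1 l \<le> p"
  proof
    fix l assume "l \<in> S"
    hence "p1 l \<le> Max (p1 ` {1..n})" unfolding S_def by (intro Max_ge) auto
    thus "p1 l \<le> p" unfolding p_def using assms(4) by simp
  qed
  have ble: "\<forall>l\<in>S. p2 l \<le> q"
  proof
    fix l assume "l \<in> S"
    hence "p2 l \<le> Max (p2 ` {1..n})" unfolding S_def by (intro Max_ge) auto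
    thus "p2 l \<le> q" unfolding q_def using assms(5) by simp
  qed
  have q0: "0 < q" using bpos oneS unfolding q_def by auto
  have qp: "q \<le> p" using assms(6) unfolding p_def q_def .
  have ph: "p \<le> 1/2" using assms(7) unfolding p_def .
  have U1: "U1 \<subseteq> Pow S" and U2: "U2 \<subseteq> Pow S" using assms(9,10) unfolding S_def .
  have ci: "cross_intersecting U1 U2" using assms(11) .
  have eq: "meas S p1 U1 * meas S p2 U2 = p*q"
    using assms(12) unfolding prod_measure_meas S_def p_def q_def .
  have wdef: "w = {l\<in>S. p1 l = p \<and> p2 l = q}" using assms(8) unfolding S_def p_def q_def .
  have iff1: "\<forall>x\<in>Pow S. x \<in> U1 \<longleftrightarrow> x \<inter> w \<in> U1"
    using eq_struct(1)[OF q0 qp ph fS apos bpos ale ble U1 U2 ci eq] unfolding wdef .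
  have iff2: "\<forall>x\<in>Pow S. x \<in> U2 \<longleftrightarrow> x \<inter> w \<in> U2"
    using eq_struct(2)[OF q0 qp ph fS apos bpos ale ble U1 U2 ci eq] unfolding wdef .
  have wS: "w \<subseteq> S" unfolding wdef by auto
  have c1: "U1 = {x \<union> y | x y. x \<in> restr U1 w \<and> y \<in> Pow ({1..n} - w)}"
    using set_form[OF U1 wS iff1] unfolding S_def .
  have c2: "U2 = {x \<union> y | x y. x \<in> restr U2 w \<and> y \<in> Pow ({1..n} - w)}"
    using set_form[OF U2 wS iff2] unfolding S_def .
  have c5: "cross_intersecting (restr U1 w) (restr U2 w)"
    unfolding cross_intersecting_def restr_def
  proof (intro ballI)
    fix x' y' assume x': "x' \<in> (\<lambda>x. x \<inter> w) ` U1" and y': "y' \<in> (\<lambda>x. x \<inter> w) ` U2"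
    then obtain x y where xy: "x \<in> U1" "y \<in> U2" "x' = x \<inter> w" "y' = y \<inter> w" by blast
    have "x \<inter> w \<in> U1" using iff1 xy U1 by blast
    moreover have "y \<inter> w \<in> U2" using iff2 xy U2 by blast
    ultimately have "(x \<inter> w) \<inter> (y \<inter> w) \<noteq> {}" using ci unfolding cross_intersecting_def by blast
    thus "x' \<inter> y' \<noteq> {}" using xy by simp
  qed
  have c6: "p1 1 = 1/2 \<and> p2 1 = 1/2 \<longrightarrow>
            card (restr U1 w) = 2 ^ (card w - 1) \<and> card (restr U2 w) = 2 ^ (card w - 1)"
  proof
    assume hh: "p1 1 = 1/2 \<and> p2 1 = 1/2"
    have fw: "finite w" using wS fS finite_subset by blast
    have h1: "\<forall>l\<in>w. p1 l = 1/2" and h2: "\<forall>l\<in>w. p2 l = 1/2"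
      using hh unfolding wdef p_def q_def by auto
    have r1: "restr U1 w = {x\<in>U1. x \<subseteq> w}"
    proof
      show "restr U1 w \<subseteq> {x\<in>U1. x \<subseteq> w}" unfolding restr_def using iff1 U1 by blast
      show "{x\<in>U1. x \<subseteq> w} \<subseteq> restr U1 w" unfolding restr_def
      proof
        fix x assume "x \<in> {x\<in>U1. x \<subseteq> w}"
        hence "x \<in> U1" "x = x \<inter> w" by auto
        thus "x \<in> (\<lambda>x. x \<inter> w) ` U1" by blast
      qed
    qed
    have r2: "restr U2 w = {x\<in>U2. x \<subseteq> w}"
    proof
      show "restr U2 w \<subseteq> {x\<in>U2. x \<subseteq> w}" unfolding restr_def using iff2 U2 by blast
      show "{x\<in>U2. x \<subseteq> w} \<subseteq> restr U2 w" unfolding restr_def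
      proof
        fix x assume "x \<in> {x\<in>U2. x \<subseteq> w}"
        hence "x \<in> U2" "x = x \<inter> w" by auto
        thus "x \<in> (\<lambda>x. x \<inter> w) ` U2" by blast
      qed
    qed
    have V1: "restr U1 w \<subseteq> Pow w" and V2: "restr U2 w \<subseteq> Pow w" unfolding r1 r2 by auto
    have m1: "meas S p1 U1 = real (card (restr U1 w)) / 2 ^ card w"
      using meas_reduce[OF fS wS U1 iff1] meas_half[OF fw h1 V1] unfolding r1 by simp
    have m2: "meas S p2 U2 = real (card (restr U2 w)) / 2 ^ card w"
      using meas_reduce[OF fS wS U2 iff2] meas_half[OF fw h2 V2] unfolding r2 by simp
    have pr: "(real (card (restr U1 w)) / 2 ^ card w) * (real (card (restr U2 w)) / 2 ^ card w) = 1/4"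
    proof -
      have "p = 1/2" "q = 1/2" using hh unfolding p_def q_def by auto
      hence "p*q = 1/4" by (simp only:)
      thus ?thesis using eq unfolding m1 m2 by simp
    qed
    have oneW: "1 \<in> w" unfolding wdef p_def q_def using oneS by simp
    have k: "1 \<le> card w" using oneW fw by (metis One_nat_def Suc_leI card_gt_0_iff empty_iff)
    have sum: "card (restr U1 w) + card (restr U2 w) \<le> 2 ^ card w" using card_cross[OF fw V1 V2 c5] .
    show "card (restr U1 w) = 2 ^ (card w - 1) \<and> card (restr U2 w) = 2 ^ (card w - 1)"
      using half_card[OF k sum pr] by simp
  qed
  show ?thesis using c1 c2 iff1 iff2 c5 c6 unfolding S_def by blast
qed


end
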